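(* Let $H$ be a hero and let $c$ be the maximum dichromatic number of a tournament containing no induced subdigraph isomorphic to $H$. Then every oriented graph $D$ in which both $x^+$ and $x^-$ induce tournaments for every vertex $x$, and which contains no induced subdigraph isomorphic to $H$, has dichromatic number at most $2c$.
   Context: Digraphs are finite, no loops, no parallel arcs; an oriented graph has no digon. $x^+$, $x^-$ are out- and in-neighbourhoods. The dichromatic number of a digraph is the least number of colours in a vertex colouring in which every colour class induces a subdigraph with no directed cycle. A hero is a tournament $H$ such that the tournaments containing no induced copy of $H$ have bounded dichromatic number (so $c$ is finite). *)

theory Defs
  imports Main
begin

definition digraph :: "'a set \<Rightarrow> ('a \<times> 'a) set \<Rightarrow> bool" where
  "digraph V A \<longleftrightarrow> finite V \<and> A \<subseteq> V \<times> V \<and> (\<forall>x. (x, x) \<notin> A)"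

definition oriented :: "'a set \<Rightarrow> ('a \<times> 'a) set \<Rightarrow> bool" where
  "oriented V A \<longleftrightarrow> digraph V A \<and> (\<forall>x y. (x, y) \<in> A \<longrightarrow> (y, x) \<notin> A)"

definition tournament :: "'a set \<Rightarrow> ('a \<times> 'a) set \<Rightarrow> bool" where
  "tournament V A \<longleftrightarrow> oriented V A \<and>
     (\<forall>x\<in>V. \<forall>y\<in>V. x \<noteq> y \<longrightarrow> (x, y) \<in> A \<or> (y, x) \<in> A)"

definition induced_arcs :: "('a \<times> 'a) set \<Rightarrow> 'a set \<Rightarrow> ('a \<times> 'a) set" where
  "induced_arcs A S = A \<inter> (S \<times> S)"

definition out_nbhd :: "('a \<times> 'a) set \<Rightarrow> 'a \<Rightarrow> 'a set" where
  "out_nbhd A x = {y. (x, y) \<in> A}"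

definition in_nbhd :: "('a \<times> 'a) set \<Rightarrow> 'a \<Rightarrow> 'a set" where
  "in_nbhd A x = {y. (y, x) \<in> A}"

definition contains_induced :: "'a set \<Rightarrow> ('a \<times> 'a) set \<Rightarrow> 'b set \<Rightarrow> ('b \<times> 'b) set \<Rightarrow> bool" where
  "contains_induced V A VH AH \<longleftrightarrow>
     (\<exists>f. inj_on f VH \<and> f ` VH \<subseteq> V \<and>
          (\<forall>x\<in>VH. \<forall>y\<in>VH. (x, y) \<in> AH \<longleftrightarrow> (f x, f y) \<in> A))"

definition dicolouring :: "'a set \<Rightarrow> ('a \<times> 'a) set \<Rightarrow> nat \<Rightarrow> ('a \<Rightarrow> nat) \<Rightarrow> bool" where
  "dicolouring V A k col \<longleftrightarrow> col ` V \<subseteq> {..<k} \<and>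
     (\<forall>i<k. acyclic (induced_arcs A {v\<in>V. col v = i}))"

definition dichromatic_number :: "'a set \<Rightarrow> ('a \<times> 'a) set \<Rightarrow> nat" where
  "dichromatic_number V A = (LEAST k. \<exists>col. dicolouring V A k col)"

text \<open>Every finite
  tournament is isomorphic to one on a finite set of naturals, so it suffices to
  quantify over tournaments with vertices in nat.\<close>
definition hero :: "'b set \<Rightarrow> ('b \<times> 'b) set \<Rightarrow> bool" where
  "hero VH AH \<longleftrightarrow> tournament VH AH \<and>
     (\<exists>c. \<forall>(V::nat set) A. tournament V A \<and> \<not> contains_induced V A VH AH
            \<longrightarrow> dichromatic_number V A \<le> c)"

text \<open>The maximum dichromatic number of an H-free tournament (finite set when H is a hero).\<close>
definition hero_c :: "'b set \<Rightarrow> ('b \<times> 'b) set \<Rightarrow> nat" where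
  "hero_c VH AH = Max {dichromatic_number V A | (V::nat set) A.
                        tournament V A \<and> \<not> contains_induced V A VH AH}"

end

theory Submission imports Defs begin

lemma trancl_map:
  assumes "(x,y) \<in> r\<^sup>+" shows "(g x, g y) \<in> (map_prod g g ` r)\<^sup>+"
  using assms
proof (induction rule: trancl_induct)
  case (base y)
  then show ?case by (intro r_into_trancl) (force)
next
  case (step y z)
  have "(g y, g z) \<in> map_prod g g ` r" using step(2) by force
  then show ?case using step(3) by (rule trancl_into_trancl[rotated])
qed

lemma acyclic_map: "acyclic (map_prod g g ` r) \<Longrightarrow> acyclic r"
  unfolding acyclic_def using trancl_map by metis

lemma layered_acyclic:
  fixes h :: "'a \<Rightarrow> nat"
  assumes mono: "\<And>x y. (x,y) \<in> r \<Longrightarrow> h x \<le> h y"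
    and lev: "\<And>n. acyclic (r \<inter> {x. h x = n} \<times> {x. h x = n})"
  shows "acyclic r"
proof -
  have key: "h x \<le> h y \<and> (h y \<le> h x \<longrightarrow> (x,y) \<in> (r \<inter> {z. h z = h x} \<times> {z. h z = h x})\<^sup>+)"
    if "(x,y) \<in> r\<^sup>+" for x y
    using that
  proof (induction rule: trancl_induct)
    case (base y)
    then show ?case using mono[of x y] by auto
  next
    case (step y z)
    have "h y \<le> h z" using mono step by auto
    then show ?case using step
      by (auto intro: trancl_into_trancl)
  qed
  show ?thesis unfolding acyclic_def
  proof
    fix x show "(x,x) \<notin> r\<^sup>+"
    proof
      assume "(x,x) \<in> r\<^sup>+"
      then have "(x,x) \<in> (r \<inter> {z. h z = h x} \<times> {z. h z = h x})\<^sup>+" using key by blast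
      then show False using lev[of "h x"] unfolding acyclic_def by blast
    qed
  qed
qed

lemma hero_colour:
  fixes S :: "'a set" and B and VH :: "'b set"
  assumes hero: "hero VH AH" and fin: "finite S" and tour: "tournament S B"
    and free: "\<not> contains_induced S B VH AH"
  shows "\<exists>f. f ` S \<subseteq> {..<hero_c VH AH} \<and>
     (\<forall>i<hero_c VH AH. acyclic (B \<inter> {x\<in>S. f x = i} \<times> {x\<in>S. f x = i}))"
proof -
  obtain \<phi> where bij: "bij_betw \<phi> S {0..<card S}" using ex_bij_betw_finite_nat[OF fin] by blast
  have inj: "inj_on \<phi> S" and img: "\<phi> ` S = {0..<card S}" using bij by (auto simp: bij_betw_def)
  define V' where "V' = {0..<card S}"
  define A' where "A' = map_prod \<phi> \<phi> ` B"
  have Bsub: "B \<subseteq> S \<times> S" and noloop: "\<And>x. (x,x) \<notin> B" and anti: "\<And>x y. (x,y) \<in> B \<Longrightarrow> (y,x) \<notin> B"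
    and compl: "\<And>x y. x \<in> S \<Longrightarrow> y \<in> S \<Longrightarrow> x \<noteq> y \<Longrightarrow> (x,y) \<in> B \<or> (y,x) \<in> B"
    using tour unfolding tournament_def oriented_def digraph_def by auto
  have mem: "(\<phi> x, \<phi> y) \<in> A' \<longleftrightarrow> (x,y) \<in> B" if "x \<in> S" "y \<in> S" for x y
  proof
    assume "(\<phi> x, \<phi> y) \<in> A'"
    then obtain a b where ab: "(a,b) \<in> B" "\<phi> x = \<phi> a" "\<phi> y = \<phi> b" unfolding A'_def by auto
    then have "a \<in> S" "b \<in> S" using Bsub by auto
    then have "a = x" "b = y" using ab inj that by (auto simp: inj_on_def)
    then show "(x,y) \<in> B" using ab by simp
  qed (auto simp: A'_def)
  have A'sub: "A' \<subseteq> \<phi> ` S \<times> \<phi> ` S" using Bsub unfolding A'_def by auto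
  have tour': "tournament V' A'"
    unfolding tournament_def oriented_def digraph_def
  proof (intro conjI allI impI ballI)
    show "finite V'" by (simp add: V'_def)
    show "A' \<subseteq> V' \<times> V'" using A'sub img V'_def by simp
    fix x
    show "(x,x) \<notin> A'"
    proof
      assume "(x,x) \<in> A'"
      then obtain a where "a \<in> S" "x = \<phi> a" using A'sub by auto
      then show False using mem noloop \<open>(x,x) \<in> A'\<close> by auto
    qed
  next
    fix x y assume xy: "(x,y) \<in> A'"
    then obtain a b where "a \<in> S" "b \<in> S" "x = \<phi> a" "y = \<phi> b" using A'sub by blast
    then show "(y,x) \<notin> A'" using mem anti xy by auto
  next
    fix x y assume "x \<in> V'" "y \<in> V'" "x \<noteq> y"
    then obtain a b where "a \<in> S" "b \<in> S" "x = \<phi> a" "y = \<phi> b" using img V'_def by (metis imageE)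
    then show "(x,y) \<in> A' \<or> (y,x) \<in> A'" using mem compl \<open>x \<noteq> y\<close> by auto
  qed
  have free': "\<not> contains_induced V' A' VH AH"
  proof
    assume "contains_induced V' A' VH AH"
    then obtain f' where f': "inj_on f' VH" "f' ` VH \<subseteq> V'"
      "\<forall>x\<in>VH. \<forall>y\<in>VH. (x, y) \<in> AH \<longleftrightarrow> (f' x, f' y) \<in> A'"
      unfolding contains_induced_def by blast
    define f where "f = inv_into S \<phi> \<circ> f'"
    have sub: "f' ` VH \<subseteq> \<phi> ` S" using f' img V'_def by simp
    have "inj_on f VH" unfolding f_def
      using comp_inj_on[OF f'(1) inj_on_inv_into[OF sub]] by simp
    moreover have fS: "f ` VH \<subseteq> S" unfolding f_def using sub by (auto intro!: inv_into_into)
    moreover have "\<forall>x\<in>VH. \<forall>y\<in>VH. (x, y) \<in> AH \<longleftrightarrow> (f x, f y) \<in> B"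
    proof (intro ballI)
      fix x y assume "x \<in> VH" "y \<in> VH"
      then have e: "\<phi> (f x) = f' x" "\<phi> (f y) = f' y" using sub unfolding f_def
        by (auto intro!: f_inv_into_f)
      have "(f x, f y) \<in> B \<longleftrightarrow> (\<phi> (f x), \<phi> (f y)) \<in> A'"
        using mem fS \<open>x \<in> VH\<close> \<open>y \<in> VH\<close> by auto
      then show "(x, y) \<in> AH \<longleftrightarrow> (f x, f y) \<in> B" using e f'(3) \<open>x \<in> VH\<close> \<open>y \<in> VH\<close> by simp
    qed
    ultimately show False using free unfolding contains_induced_def by blast
  qed
  obtain c0 where c0: "\<forall>(V::nat set) A. tournament V A \<and> \<not> contains_induced V A VH AH
            \<longrightarrow> dichromatic_number V A \<le> c0" using hero unfolding hero_def by blast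
  let ?Sset = "{dichromatic_number V A | (V::nat set) A.
                        tournament V A \<and> \<not> contains_induced V A VH AH}"
  have "?Sset \<subseteq> {..c0}" using c0 by auto
  then have "finite ?Sset" using finite_subset by blast
  moreover have "dichromatic_number V' A' \<in> ?Sset" using tour' free' by blast
  ultimately have kle: "dichromatic_number V' A' \<le> hero_c VH AH" unfolding hero_c_def
    by (rule Max_ge)
  have ex: "\<exists>col. dicolouring V' A' (card S) col"
  proof
    show "dicolouring V' A' (card S) (\<lambda>z. z)"
      unfolding dicolouring_def
    proof (intro conjI allI impI)
      show "(\<lambda>z. z) ` V' \<subseteq> {..<card S}" by (auto simp: V'_def)
      fix i
      have "induced_arcs A' {v \<in> V'. v = i} = {}"
        using tour' unfolding tournament_def oriented_def digraph_def induced_arcs_def by auto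
      then show "acyclic (induced_arcs A' {v \<in> V'. v = i})" by (simp add: acyclic_def)
    qed
  qed
  have ex2: "\<exists>k col. dicolouring V' A' k col" using ex by blast
  define k where "k = dichromatic_number V' A'"
  obtain col where col: "dicolouring V' A' k col"
    using LeastI_ex[of "\<lambda>k. \<exists>col. dicolouring V' A' k col", OF ex2] unfolding k_def dichromatic_number_def by blast
  show ?thesis
  proof (intro exI conjI allI impI)
    have "\<phi> ` S \<subseteq> V'" using img V'_def by simp
    then show "(col \<circ> \<phi>) ` S \<subseteq> {..<hero_c VH AH}" using col kle k_def
      unfolding dicolouring_def by fastforce
    fix i assume "i < hero_c VH AH"
    show "acyclic (B \<inter> {x\<in>S. (col \<circ> \<phi>) x = i} \<times> {x\<in>S. (col \<circ> \<phi>) x = i})"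
    proof (cases "i < k")
      case True
      then have ac: "acyclic (induced_arcs A' {v \<in> V'. col v = i})" using col unfolding dicolouring_def by blast
      have "map_prod \<phi> \<phi> ` (B \<inter> {x\<in>S. (col \<circ> \<phi>) x = i} \<times> {x\<in>S. (col \<circ> \<phi>) x = i})
           \<subseteq> induced_arcs A' {v \<in> V'. col v = i}"
        using img V'_def unfolding induced_arcs_def A'_def by auto
      then show ?thesis using acyclic_map acyclic_subset ac by blast
    next
      case False
      have "\<phi> ` S \<subseteq> V'" using img V'_def by simp
      then have "{x\<in>S. (col \<circ> \<phi>) x = i} = {}" using col False unfolding dicolouring_def by fastforce
      then show ?thesis by (simp only:) (simp add: acyclic_def)
    qed
  qed
qed

locale lt =
  fixes V :: "'a set" and A :: "('a \<times> 'a) set" and VH :: "'b set" and AH :: "('b \<times> 'b) set"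
  assumes hero: "hero VH AH" and ori: "oriented V A"
    and outT: "\<forall>x\<in>V. tournament (out_nbhd A x) (induced_arcs A (out_nbhd A x))"
    and inT: "\<forall>x\<in>V. tournament (in_nbhd A x) (induced_arcs A (in_nbhd A x))"
    and free: "\<not> contains_induced V A VH AH"
begin

abbreviation "c \<equiv> hero_c VH AH"

lemma finV: "finite V" and AV: "A \<subseteq> V \<times> V" and noloop: "(x,x) \<notin> A"
  and anti: "(x,y) \<in> A \<Longrightarrow> (y,x) \<notin> A"
  using ori unfolding oriented_def digraph_def by auto

lemma adj_out: "x \<in> V \<Longrightarrow> (x,u) \<in> A \<Longrightarrow> (x,w) \<in> A \<Longrightarrow> u \<noteq> w \<Longrightarrow> (u,w) \<in> A \<or> (w,u) \<in> A"
  using outT unfolding tournament_def induced_arcs_def out_nbhd_def by blast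

lemma adj_in: "x \<in> V \<Longrightarrow> (u,x) \<in> A \<Longrightarrow> (w,x) \<in> A \<Longrightarrow> u \<noteq> w \<Longrightarrow> (u,w) \<in> A \<or> (w,u) \<in> A"
  using inT unfolding tournament_def induced_arcs_def in_nbhd_def by blast

lemma colour_sub:
  assumes SV: "S \<subseteq> V" and adj: "\<And>x y. x \<in> S \<Longrightarrow> y \<in> S \<Longrightarrow> x \<noteq> y \<Longrightarrow> (x,y) \<in> A \<or> (y,x) \<in> A"
  shows "\<exists>f. f ` S \<subseteq> {..<c} \<and> (\<forall>i<c. acyclic (A \<inter> {x\<in>S. f x = i} \<times> {x\<in>S. f x = i}))"
proof -
  have finS: "finite S" using SV finV finite_subset by blast
  have tour: "tournament S (induced_arcs A S)"
    unfolding tournament_def oriented_def digraph_def induced_arcs_def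
    using finS noloop anti adj by blast
  have fr: "\<not> contains_induced S (induced_arcs A S) VH AH"
  proof
    assume "contains_induced S (induced_arcs A S) VH AH"
    then obtain f where "inj_on f VH" "f ` VH \<subseteq> S"
      "\<forall>x\<in>VH. \<forall>y\<in>VH. (x, y) \<in> AH \<longleftrightarrow> (f x, f y) \<in> induced_arcs A S"
      unfolding contains_induced_def by blast
    then have "contains_induced V A VH AH" unfolding contains_induced_def induced_arcs_def
      using SV by (intro exI[of _ f]) blast
    then show False using free by blast
  qed
  obtain f where f: "f ` S \<subseteq> {..<c}"
    "\<forall>i<c. acyclic (induced_arcs A S \<inter> {x\<in>S. f x = i} \<times> {x\<in>S. f x = i})"
    using hero_colour[OF hero finS tour fr] by blast
  have "induced_arcs A S \<inter> {x\<in>S. f x = i} \<times> {x\<in>S. f x = i} = A \<inter> {x\<in>S. f x = i} \<times> {x\<in>S. f x = i}" for i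
    unfolding induced_arcs_def by blast
  then show ?thesis using f by auto
qed

end

locale lt2 = lt +
  fixes W v
  assumes WV: "W \<subseteq> V" and vW: "v \<in> W"
begin

definition "r = A \<inter> W \<times> W"
definition "R = {x. (v,x) \<in> r\<^sup>*}"
definition "dist x = (LEAST n. (v,x) \<in> r ^^ n)"

lemma R_W: "R \<subseteq> W"
proof
  fix x assume "x \<in> R"
  then have "(v,x) \<in> r\<^sup>*" unfolding R_def by simp
  then show "x \<in> W" by (induction rule: rtrancl_induct) (auto simp: vW r_def)
qed

lemma vR: "v \<in> R" unfolding R_def by simp

lemma dist_pow: "x \<in> R \<Longrightarrow> (v,x) \<in> r ^^ dist x"
  unfolding R_def dist_def using rtrancl_power LeastI_ex by (metis mem_Collect_eq)

lemma dist_le: "(v,x) \<in> r ^^ n \<Longrightarrow> dist x \<le> n"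
  unfolding dist_def by (rule Least_le)

lemma dist0: "x \<in> R \<Longrightarrow> dist x = 0 \<longleftrightarrow> x = v"
proof
  assume "x \<in> R" "dist x = 0" then show "x = v" using dist_pow by fastforce
next
  assume "x = v" then show "dist x = 0" using dist_le[of v 0] by simp
qed

lemma step: "x \<in> R \<Longrightarrow> (x,y) \<in> A \<Longrightarrow> y \<in> W \<Longrightarrow> y \<in> R \<and> dist y \<le> Suc (dist x)"
proof -
  assume a: "x \<in> R" "(x,y) \<in> A" "y \<in> W"
  then have "(x,y) \<in> r" using R_W unfolding r_def by auto
  then have "(v,y) \<in> r ^^ Suc (dist x)" using dist_pow[OF a(1)] by (rule relpow_Suc_I[rotated])
  then show ?thesis using dist_le rtrancl_power unfolding R_def by blast
qed

lemma pred: "x \<in> R \<Longrightarrow> x \<noteq> v \<Longrightarrow> \<exists>q. q \<in> R \<and> (q,x) \<in> A \<and> Suc (dist q) = dist x"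
proof -
  assume a: "x \<in> R" "x \<noteq> v"
  then obtain k where k: "dist x = Suc k" using dist0 not0_implies_Suc by blast
  then have "(v,x) \<in> r ^^ Suc k" using dist_pow[OF a(1)] by simp
  then obtain q where q: "(v,q) \<in> r ^^ k" "(q,x) \<in> r" by (rule relpow_Suc_E)
  have qR: "q \<in> R" using q(1) rtrancl_power unfolding R_def by blast
  have "dist q \<le> k" using dist_le q(1) by blast
  moreover have "dist x \<le> Suc (dist q)" using step[OF qR] q(2) unfolding r_def by blast
  ultimately have "Suc (dist q) = dist x" using k by simp
  then show ?thesis using qR q(2) unfolding r_def by blast
qed

lemma RV: "x \<in> R \<Longrightarrow> x \<in> V" using R_W WV by blast

lemma back_arc: "j = dist w \<Longrightarrow> w \<in> R \<Longrightarrow> u \<in> R \<Longrightarrow> (u,w) \<in> A \<Longrightarrow> dist w < dist u \<Longrightarrow> (u,v) \<in> A"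
proof (induction j arbitrary: w)
  case 0
  then show ?case using dist0 by auto
next
  case (Suc k)
  then have "w \<noteq> v" using dist0[OF Suc.prems(2)] by auto
  then obtain q where q: "q \<in> R" "(q,w) \<in> A" "Suc (dist q) = dist w" using pred Suc by blast
  have "u \<noteq> q" using q Suc by auto
  then have "(u,q) \<in> A \<or> (q,u) \<in> A" using adj_in[OF RV[OF Suc(3)] Suc(5) q(2)] by blast
  moreover have "(q,u) \<notin> A"
  proof
    assume "(q,u) \<in> A"
    then have "dist u \<le> Suc (dist q)" using step[OF q(1)] Suc(4) R_W by blast
    then show False using q Suc by simp
  qed
  ultimately have "(u,q) \<in> A" by blast
  then show ?case using Suc.IH[of q] q Suc by simp
qed

lemma mono: "x \<in> R \<Longrightarrow> (x,y) \<in> A \<Longrightarrow> y \<in> W \<Longrightarrow> (x,v) \<notin> A \<Longrightarrow> dist x \<le> dist y"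
proof (rule ccontr)
  assume a: "x \<in> R" "(x,y) \<in> A" "y \<in> W" "(x,v) \<notin> A" "\<not> dist x \<le> dist y"
  then have "y \<in> R" using step by blast
  then show False using back_arc[of "dist y" y x] a by simp
qed

lemma layer: "i = dist u \<Longrightarrow> dist w = dist u \<Longrightarrow> u \<in> R \<Longrightarrow> w \<in> R \<Longrightarrow> (u,v) \<notin> A \<Longrightarrow> (w,v) \<notin> A
   \<Longrightarrow> u \<noteq> w \<Longrightarrow> (u,w) \<in> A \<or> (w,u) \<in> A"
proof (induction i arbitrary: u w)
  case 0
  then show ?case using dist0[OF 0(3)] dist0[OF 0(4)] by auto
next
  case (Suc k)
  then have "u \<noteq> v" "w \<noteq> v" using dist0[OF Suc.prems(3)] dist0[OF Suc.prems(4)] by auto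
  then obtain u' w' where u': "u' \<in> R" "(u',u) \<in> A" "Suc (dist u') = dist u"
    and w': "w' \<in> R" "(w',w) \<in> A" "Suc (dist w') = dist w" using pred Suc by metis
  show ?case
  proof (cases "k = 0")
    case True
    then have "u' = v" "w' = v" using u' w' Suc dist0[OF u'(1)] dist0[OF w'(1)] by auto
    then show ?thesis using adj_out[OF RV[OF vR]] u' w' Suc by blast
  next
    case False
    have notin: "(a',v) \<notin> A" if "a' \<in> R" "(a',a) \<in> A" "Suc (dist a') = dist a" "dist a = Suc k"
      "(a,v) \<notin> A" "a \<in> R" for a a'
    proof
      assume av: "(a',v) \<in> A"
      have "a \<noteq> v" using that dist0[OF that(6)] by auto
      then have "(a,v) \<in> A \<or> (v,a) \<in> A" using adj_out[OF RV[OF that(1)] that(2) av] by blast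
      moreover have "(v,a) \<notin> A"
      proof
        assume "(v,a) \<in> A"
        then have "dist a \<le> Suc (dist v)" using step[OF vR] that(6) R_W by blast
        then show False using dist0[OF vR] that False by simp
      qed
      ultimately show False using that by blast
    qed
    have nu: "(u',v) \<notin> A" using notin[OF u'] Suc by simp
    have nw: "(w',v) \<notin> A" using notin[OF w'] Suc by simp
    have helper: "(a,b) \<in> A \<or> (b,a) \<in> A" if "(a',a) \<in> A" "(b',b) \<in> A" "a \<in> R" "b \<in> R" "a' \<in> R" "b' \<in> R"
      "dist a = Suc k" "dist b' = k" "(a,v) \<notin> A" "(a',b') \<in> A" "a \<noteq> b" for a b a' b'
    proof -
      have "a \<noteq> b'" using that by auto
      then have "(a,b') \<in> A \<or> (b',a) \<in> A" using adj_out[OF RV[OF that(5)] that(1) that(10)] by blast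
      moreover have "(a,b') \<notin> A" using back_arc[of "dist b'" b' a] that by auto
      ultimately have "(b',a) \<in> A" by blast
      then show ?thesis using adj_out[OF RV[OF that(6)] _ that(2) that(11)] by blast
    qed
    show ?thesis
    proof (cases "u' = w'")
      case True
      then show ?thesis using adj_out[OF RV[OF u'(1)] u'(2)] w'(2) Suc by blast
    next
      case ne: False
      have "(u',w') \<in> A \<or> (w',u') \<in> A"
        using Suc.IH[of u' w'] u' w' Suc nu nw ne by simp
      then show ?thesis
      proof
        assume "(u',w') \<in> A"
        then show ?thesis using helper[of u' u w' w] u' w' Suc by simp
      next
        assume "(w',u') \<in> A"
        then show ?thesis using helper[of w' w u' u] u' w' Suc by auto
      qed
    qed
  qed
qed

end

context lt begin

lemma main:
  "finite W \<Longrightarrow> W \<subseteq> V \<Longrightarrow> \<exists>col. col ` W \<subseteq> {..<2*c} \<and>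
      (\<forall>i<2*c. acyclic (A \<inter> {x\<in>W. col x = i} \<times> {x\<in>W. col x = i}))"
proof (induction W rule: finite_psubset_induct)
  case (psubset W)
  show ?case
  proof (cases "W = {}")
    case True
    then show ?thesis by (auto simp: acyclic_def)
  next
    case False
    then obtain v where vW: "v \<in> W" by blast
    interpret l2: lt2 V A VH AH W v
      by (unfold_locales) (use psubset.prems vW in blast)+
    define T0 where "T0 = {x\<in>l2.R. (x,v) \<in> A}"
    define T where "T n = {x\<in>l2.R. l2.dist x = n \<and> (x,v) \<notin> A}" for n
    obtain f0 where f0: "f0 ` T0 \<subseteq> {..<c}" "\<forall>i<c. acyclic (A \<inter> {x\<in>T0. f0 x = i} \<times> {x\<in>T0. f0 x = i})"
    proof -
      have "\<exists>f. f ` T0 \<subseteq> {..<c} \<and> (\<forall>i<c. acyclic (A \<inter> {x\<in>T0. f x = i} \<times> {x\<in>T0. f x = i}))"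
      proof (rule colour_sub)
        show "T0 \<subseteq> V" using l2.RV by (auto simp: T0_def)
        fix x y assume "x \<in> T0" "y \<in> T0" "x \<noteq> y"
        then show "(x,y) \<in> A \<or> (y,x) \<in> A"
          using adj_in[OF l2.RV[OF l2.vR], of x y] by (simp add: T0_def)
      qed
      then show ?thesis using that by blast
    qed
    have "\<forall>n. \<exists>g. g ` T n \<subseteq> {..<c} \<and> (\<forall>i<c. acyclic (A \<inter> {x\<in>T n. g x = i} \<times> {x\<in>T n. g x = i}))"
    proof
      fix n
      show "\<exists>g. g ` T n \<subseteq> {..<c} \<and> (\<forall>i<c. acyclic (A \<inter> {x\<in>T n. g x = i} \<times> {x\<in>T n. g x = i}))"
      proof (rule colour_sub)
        show "T n \<subseteq> V" using l2.RV by (auto simp: T_def)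
        fix x y assume "x \<in> T n" "y \<in> T n" "x \<noteq> y"
        then show "(x,y) \<in> A \<or> (y,x) \<in> A"
          using l2.layer[of "l2.dist x" x y] by (simp add: T_def)
      qed
    qed
    then have "\<exists>G. \<forall>n. G n ` T n \<subseteq> {..<c} \<and> (\<forall>i<c. acyclic (A \<inter> {x\<in>T n. G n x = i} \<times> {x\<in>T n. G n x = i}))"
      by (rule choice)
    then obtain G where G0: "\<forall>n. G n ` T n \<subseteq> {..<c} \<and> (\<forall>i<c. acyclic (A \<inter> {x\<in>T n. G n x = i} \<times> {x\<in>T n. G n x = i}))"
      by blast
    have G: "\<And>n. G n ` T n \<subseteq> {..<c}"
      "\<And>n i. i < c \<Longrightarrow> acyclic (A \<inter> {x\<in>T n. G n x = i} \<times> {x\<in>T n. G n x = i})"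
      using G0 by blast+
    have sub: "W - l2.R \<subset> W" using l2.vR vW by blast
    then obtain col' where col': "col' ` (W - l2.R) \<subseteq> {..<2*c}"
      "\<And>i. i < 2*c \<Longrightarrow> acyclic (A \<inter> {x\<in>W - l2.R. col' x = i} \<times> {x\<in>W - l2.R. col' x = i})"
      using psubset.IH[OF sub] psubset.prems by blast
    define col where "col x = (if x \<in> l2.R then (if (x,v) \<in> A then f0 x else c + G (l2.dist x) x) else col' x)" for x
    define h where "h x = (if x \<in> l2.R then (if (x,v) \<in> A then 1 else l2.dist x + 2) else (0::nat))" for x
    have colR1: "col x = f0 x \<and> x \<in> T0 \<and> f0 x < c" if "x \<in> l2.R" "(x,v) \<in> A" for x
      using that f0(1) by (auto simp: col_def T0_def)
    have colR2: "col x = c + G (l2.dist x) x \<and> x \<in> T (l2.dist x)" if "x \<in> l2.R" "(x,v) \<notin> A" for x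
      using that by (simp add: col_def T_def)
    have colN: "col x = col' x" if "x \<notin> l2.R" for x using that by (simp add: col_def)
    have h0: "h x = 0 \<longleftrightarrow> x \<notin> l2.R" for x by (simp add: h_def)
    have h1: "h x = Suc 0 \<longleftrightarrow> x \<in> l2.R \<and> (x,v) \<in> A" for x by (simp add: h_def)
    have h2: "h x = Suc (Suc p) \<longleftrightarrow> x \<in> l2.R \<and> (x,v) \<notin> A \<and> l2.dist x = p" for x p by (simp add: h_def)
    show ?thesis
    proof (intro exI conjI allI impI)
      show "col ` W \<subseteq> {..<2*c}"
      proof
        fix y assume "y \<in> col ` W"
        then obtain x where x: "x \<in> W" "y = col x" by blast
        show "y \<in> {..<2*c}"
        proof (cases "x \<in> l2.R")
          case True
          show ?thesis
          proof (cases "(x,v) \<in> A")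
            case True
            then have "x \<in> T0" using \<open>x \<in> l2.R\<close> by (simp add: T0_def)
            then show ?thesis using colR1[OF \<open>x \<in> l2.R\<close> True] x by simp
          next
            case False
            then have "x \<in> T (l2.dist x)" using \<open>x \<in> l2.R\<close> by (simp add: T_def)
            then have "G (l2.dist x) x < c" using G(1)[of "l2.dist x"] by blast
            then show ?thesis using colR2[OF \<open>x \<in> l2.R\<close> False] x by simp
          qed
        next
          case False
          then show ?thesis using col'(1) x colN[OF False] by auto
        qed
      qed
      fix i assume i: "i < 2*c"
      let ?K = "{x\<in>W. col x = i}"
      let ?r = "A \<inter> ?K \<times> ?K"
      show "acyclic ?r"
      proof (rule layered_acyclic[where h = h])
        fix x y assume xy: "(x,y) \<in> ?r"
        show "h x \<le> h y"
        proof (cases "x \<in> l2.R")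
          case False
          then show ?thesis by (simp add: h_def)
        next
          case xR: True
          have yR: "y \<in> l2.R" using l2.step[OF xR] xy by blast
          have ceq: "col x = col y" using xy by simp
          show ?thesis
          proof (cases "(x,v) \<in> A")
            case True
            have "col x < c" using colR1[OF xR True] by simp
            then have "(y,v) \<in> A" using ceq colR2[OF yR] by force
            then show ?thesis using xR yR True h1[of x] h1[of y] by simp
          next
            case False
            then have "col x \<ge> c" using colR2[OF xR] by simp
            moreover have "(y,v) \<in> A \<Longrightarrow> col y < c"
              using colR1[OF yR] by simp
            ultimately have "(y,v) \<notin> A" using ceq by auto
            then show ?thesis using xR yR False l2.mono[OF xR] xy by (simp add: h_def)
          qed
        qed
      next
        fix n
        let ?L = "{x. h x = n}"
        show "acyclic (?r \<inter> ?L \<times> ?L)"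
        proof (cases n)
          case 0
          have "?r \<inter> ?L \<times> ?L \<subseteq> A \<inter> {x\<in>W - l2.R. col' x = i} \<times> {x\<in>W - l2.R. col' x = i}"
            using 0 h0 colN by auto
          then show ?thesis using col'(2)[OF i] acyclic_subset by blast
        next
          case (Suc m)
          show ?thesis
          proof (cases m)
            case 0
            have s1: "?r \<inter> ?L \<times> ?L \<subseteq> A \<inter> {x\<in>T0. f0 x = i} \<times> {x\<in>T0. f0 x = i}"
              using Suc 0 h1 colR1 by auto
            show ?thesis
            proof (cases "i < c")
              case True
              then show ?thesis using s1 f0(2) acyclic_subset by blast
            next
              case False
              then have "{x\<in>T0. f0 x = i} = {}" using f0(1) by auto
              then have "acyclic (A \<inter> {x\<in>T0. f0 x = i} \<times> {x\<in>T0. f0 x = i})"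
                by (simp only:) (simp add: acyclic_def)
              then show ?thesis using s1 acyclic_subset by blast
            qed
          next
            case (Suc p)
            have s1: "?r \<inter> ?L \<times> ?L \<subseteq> A \<inter> {x\<in>T p. c + G p x = i} \<times> {x\<in>T p. c + G p x = i}"
            proof (rule subsetI)
              fix z assume z: "z \<in> ?r \<inter> ?L \<times> ?L"
              obtain a b where ab: "z = (a,b)" by (cases z)
              have n2: "n = Suc (Suc p)" using Suc \<open>n = Suc m\<close> by simp
              have a: "a \<in> l2.R" "(a,v) \<notin> A" "l2.dist a = p" "a \<in> W" "col a = i"
                using z ab h2[of a p] n2 by auto
              have b: "b \<in> l2.R" "(b,v) \<notin> A" "l2.dist b = p" "b \<in> W" "col b = i"
                using z ab h2[of b p] n2 by auto
              have "a \<in> T p" "b \<in> T p" using a b by (simp_all add: T_def)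
              moreover have "c + G p a = i" "c + G p b = i" using colR2[OF a(1,2)] colR2[OF b(1,2)] a b by simp_all
              moreover have "(a,b) \<in> A" using z ab by simp
              ultimately show "z \<in> A \<inter> {x\<in>T p. c + G p x = i} \<times> {x\<in>T p. c + G p x = i}" using ab by simp
            qed
            show ?thesis
            proof (cases "c \<le> i")
              case True
              have "{x\<in>T p. c + G p x = i} = {x\<in>T p. G p x = i - c}" using True by auto
              moreover have "i - c < c" using True i by simp
              ultimately have "acyclic (A \<inter> {x\<in>T p. c + G p x = i} \<times> {x\<in>T p. c + G p x = i})"
                using G(2)[of "i - c" p] by simp
              then show ?thesis using s1 acyclic_subset by blast
            next
              case False
              then have "{x\<in>T p. c + G p x = i} = {}" by auto
              then have "acyclic (A \<inter> {x\<in>T p. c + G p x = i} \<times> {x\<in>T p. c + G p x = i})"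
                by (simp only:) (simp add: acyclic_def)
              then show ?thesis using s1 acyclic_subset by blast
            qed
          qed
        qed
      qed
    qed
  qed
qed

end

theorem theorem4p1:
  fixes VH :: "'b set" and AH :: "('b \<times> 'b) set"
    and V :: "'a set" and A :: "('a \<times> 'a) set"
  assumes "hero VH AH"
    and "oriented V A"
    and "\<forall>x\<in>V. tournament (out_nbhd A x) (induced_arcs A (out_nbhd A x))"
    and "\<forall>x\<in>V. tournament (in_nbhd A x) (induced_arcs A (in_nbhd A x))"
    and "\<not> contains_induced V A VH AH"
  shows "dichromatic_number V A \<le> 2 * hero_c VH AH"
proof -
  interpret lt V A VH AH using assms by unfold_locales
  obtain col where col: "col ` V \<subseteq> {..<2*c}"
    "\<forall>i<2*c. acyclic (A \<inter> {x\<in>V. col x = i} \<times> {x\<in>V. col x = i})"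
    using main[OF finV] by blast
  have "dicolouring V A (2*c) col" unfolding dicolouring_def induced_arcs_def using col by blast
  then show ?thesis unfolding dichromatic_number_def by (blast intro: Least_le)
qed

end
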